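(* Consider a fully connected layer $w^i=\phi_i(W_iw^{i-1}+b_i)$ with $W_i\in\mathbb{R}^{n_i\times n_{i-1}}$, $b_i\in\mathbb{R}^{n_i}$ and $\phi_i(\nu)=(\varphi(\nu_1),\dots,\varphi(\nu_{n_i}))^\top$, where $\varphi:\mathbb{R}\to\mathbb{R}$ is slope-restricted on $[0,1]$. Let $Q_i\in\mathbb{S}^{n_i}$, $S_i\in\mathbb{R}^{n_i\times n_{i-1}}$, $R_i\in\mathbb{S}^{n_{i-1}}$. If there exists a positive definite diagonal $\Lambda_i\in\mathbb{R}^{n_i\times n_i}$ such that $$\begin{bmatrix}R_i & S_i^\top-W_i^\top\Lambda_i\\ S_i-\Lambda_iW_i & 2\Lambda_i+Q_i\end{bmatrix}\succeq 0,$$ then for all $w^{i-1}_a,w^{i-1}_b\in\mathbb{R}^{n_{i-1}}$, with $\Delta w^{i}=w^i_a-w^i_b$ and $\Delta w^{i-1}=w^{i-1}_a-w^{i-1}_b$, $${\Delta w^i}^\top Q_i\Delta w^i+2{\Delta w^i}^\top S_i\Delta w^{i-1}+{\Delta w^{i-1}}^\top R_i\Delta w^{i-1}\ge 0.$$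
   Context: $\mathbb{S}^n$ denotes the real symmetric $n\times n$ matrices. A function $\varphi:\mathbb{R}\to\mathbb{R}$ is slope-restricted on $[0,1]$ if $0\le\frac{\varphi(s)-\varphi(t)}{s-t}\le 1$ for all $s\ne t$. *)

theory Defs
  imports "HOL-Analysis.Analysis"
begin

definition slope_restricted_01 :: "(real \<Rightarrow> real) \<Rightarrow> bool" where
  "slope_restricted_01 \<phi> \<longleftrightarrow>
     (\<forall>s t. s \<noteq> t \<longrightarrow> 0 \<le> (\<phi> s - \<phi> t) / (s - t) \<and> (\<phi> s - \<phi> t) / (s - t) \<le> 1)"

definition layer :: "real^'a^'b \<Rightarrow> real^'b \<Rightarrow> (real \<Rightarrow> real) \<Rightarrow> real^'a \<Rightarrow> real^'b" where
  "layer W b \<phi> w = (\<chi> j. \<phi> ((W *v w + b) $ j))"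

definition symmetric_mat :: "real^'n^'n \<Rightarrow> bool" where
  "symmetric_mat M \<longleftrightarrow> transpose M = M"

definition diagonal_mat :: "real^'n^'n \<Rightarrow> bool" where
  "diagonal_mat M \<longleftrightarrow> (\<forall>i j. i \<noteq> j \<longrightarrow> M $ i $ j = 0)"

definition pos_def_mat :: "real^'n^'n \<Rightarrow> bool" where
  "pos_def_mat M \<longleftrightarrow> symmetric_mat M \<and> (\<forall>x. x \<noteq> 0 \<longrightarrow> x \<bullet> (M *v x) > 0)"

definition psd_mat :: "real^'n^'n \<Rightarrow> bool" where
  "psd_mat M \<longleftrightarrow> symmetric_mat M \<and> (\<forall>x. x \<bullet> (M *v x) \<ge> 0)"

definition block_mat :: "real^'a^'a \<Rightarrow> real^'b^'a \<Rightarrow> real^'a^'b \<Rightarrow> real^'b^'b \<Rightarrow> real^('a+'b)^('a+'b)" where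
  "block_mat A B C D = (\<chi> i j. case i of
       Inl p \<Rightarrow> (case j of Inl q \<Rightarrow> A $ p $ q | Inr q \<Rightarrow> B $ p $ q)
     | Inr p \<Rightarrow> (case j of Inl q \<Rightarrow> C $ p $ q | Inr q \<Rightarrow> D $ p $ q))"

end

theory Submission
  imports Defs
begin

lemma sum_UNIV_plus:
  fixes f :: "('a::finite + 'b::finite) \<Rightarrow> real"
  shows "sum f UNIV = sum (\<lambda>p. f (Inl p)) UNIV + sum (\<lambda>q. f (Inr q)) UNIV"
proof -
  have "sum f UNIV = sum f (UNIV <+> UNIV)" by (simp add: UNIV_Plus_UNIV)
  also have "\<dots> = sum (f \<circ> Inl) UNIV + sum (f \<circ> Inr) UNIV" by (rule sum.Plus) auto
  finally show ?thesis by (simp add: o_def)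
qed

lemma block_quad:
  fixes A :: "real^'a^'a" and B :: "real^'b^'a" and C :: "real^'a^'b" and D :: "real^'b^'b"
  shows "((\<chi> i. case i of Inl p \<Rightarrow> x $ p | Inr q \<Rightarrow> y $ q) :: real^('a+'b)) \<bullet> (block_mat A B C D *v (\<chi> i. case i of Inl p \<Rightarrow> x $ p | Inr q \<Rightarrow> y $ q)) = x \<bullet> (A *v x) + x \<bullet> (B *v y) + y \<bullet> (C *v x) + y \<bullet> (D *v y)"
proof -
  let ?z = "(\<chi> i. case i of Inl p \<Rightarrow> x $ p | Inr q \<Rightarrow> y $ q) :: real^('a+'b)"
  let ?M = "block_mat A B C D"
  have r1: "(?M *v ?z) $ Inl p = (A *v x) $ p + (B *v y) $ p" for p
    unfolding matrix_vector_mult_def block_mat_def by (simp add: sum_UNIV_plus)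
  have r2: "(?M *v ?z) $ Inr p = (C *v x) $ p + (D *v y) $ p" for p
    unfolding matrix_vector_mult_def block_mat_def by (simp add: sum_UNIV_plus)
  have "?z \<bullet> (?M *v ?z) = (\<Sum>p\<in>UNIV. x $ p * ((A *v x) $ p + (B *v y) $ p)) + (\<Sum>p\<in>UNIV. y $ p * ((C *v x) $ p + (D *v y) $ p))"
    unfolding inner_vec_def by (subst sum_UNIV_plus) (simp add: r1 r2)
  also have "\<dots> = x \<bullet> (A *v x) + x \<bullet> (B *v y) + y \<bullet> (C *v x) + y \<bullet> (D *v y)"
    unfolding inner_vec_def by (simp add: distrib_left sum.distrib)
  finally show ?thesis .
qed

lemma bilin_transpose:
  fixes A :: "real^'a^'b"
  shows "x \<bullet> (transpose A *v y) = y \<bullet> (A *v x)"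
  by (metis transpose_matrix_vector dot_lmul_matrix inner_commute)

lemma transpose_diff': "transpose (A - B) = transpose A - transpose (B::real^'a^'b)"
  by (simp add: transpose_def vec_eq_iff)

theorem lemma6:
  fixes W :: "real^'a^'b" and b :: "real^'b" and \<phi> :: "real \<Rightarrow> real"
    and Q :: "real^'b^'b" and S :: "real^'a^'b" and R :: "real^'a^'a"
    and \<Lambda> :: "real^'b^'b"
  assumes "slope_restricted_01 \<phi>"
    and "symmetric_mat Q" and "symmetric_mat R"
    and "diagonal_mat \<Lambda>" and "pos_def_mat \<Lambda>"
    and "psd_mat (block_mat R (transpose S - transpose W ** \<Lambda>) (S - \<Lambda> ** W) (2 *\<^sub>R \<Lambda> + Q))"
  shows "\<forall>wa wb :: real^'a.
           let dwi = layer W b \<phi> wa - layer W b \<phi> wb; dw = wa - wb in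
           dwi \<bullet> (Q *v dwi) + 2 * (dwi \<bullet> (S *v dw)) + dw \<bullet> (R *v dw) \<ge> 0"
proof (intro allI)
  fix wa wb :: "real^'a"
  define u where "u = layer W b \<phi> wa - layer W b \<phi> wb"
  define dw where "dw = wa - wb"
  define v where "v = W *v dw"
  have lampos: "\<Lambda> $ j $ j > 0" for j
  proof -
    have "axis j (1::real) \<noteq> 0" by (simp add: axis_eq_0_iff)
    with assms(5) have "axis j 1 \<bullet> (\<Lambda> *v axis j 1) > 0" unfolding pos_def_mat_def by blast
    moreover have "axis j 1 \<bullet> (\<Lambda> *v axis j 1) = \<Lambda> $ j $ j"
      by (simp add: inner_vec_def matrix_vector_mult_def axis_def mult.commute[of _ "if _ then _ else _"] if_distrib[of "\<lambda>t. t * _"] cong: if_cong)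
    ultimately show ?thesis by simp
  qed
  have comp: "u $ j * (v $ j - u $ j) \<ge> 0" for j
  proof -
    define s where "s = (W *v wa + b) $ j"
    define t where "t = (W *v wb + b) $ j"
    have uj: "u $ j = \<phi> s - \<phi> t" unfolding u_def layer_def s_def t_def by simp
    have vj: "v $ j = s - t" unfolding v_def dw_def s_def t_def
      by (simp add: matrix_vector_mult_diff_distrib)
    show ?thesis
    proof (cases "s = t")
      case True then show ?thesis by (simp add: uj)
    next
      case False
      define r where "r = (\<phi> s - \<phi> t) / (s - t)"
      have r: "0 \<le> r" "r \<le> 1" using assms(1) False unfolding slope_restricted_01_def r_def by auto
      have "u $ j = r * v $ j" using False by (simp add: uj vj r_def)
      then have "u $ j * (v $ j - u $ j) = r * (1 - r) * (v $ j)^2"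
        by (simp add: power2_eq_square algebra_simps)
      also have "\<dots> \<ge> 0" using r by simp
      finally show ?thesis .
    qed
  qed
  have key: "u \<bullet> (\<Lambda> *v v) - u \<bullet> (\<Lambda> *v u) \<ge> 0"
  proof -
    have "\<Lambda> *v x = (\<chi> j. \<Lambda> $ j $ j * x $ j)" for x :: "real^'b"
    proof -
      have "(\<Sum>k\<in>UNIV. \<Lambda> $ j $ k * x $ k) = \<Lambda> $ j $ j * x $ j" for j
      proof -
        have "(\<Sum>k\<in>UNIV. \<Lambda> $ j $ k * x $ k) = \<Lambda> $ j $ j * x $ j + (\<Sum>k\<in>UNIV - {j}. \<Lambda> $ j $ k * x $ k)"
          by (rule sum.remove) auto
        also have "(\<Sum>k\<in>UNIV - {j}. \<Lambda> $ j $ k * x $ k) = 0"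
          using assms(4) by (intro sum.neutral) (auto simp: diagonal_mat_def)
        finally show ?thesis by simp
      qed
      then show ?thesis by (simp add: matrix_vector_mult_def)
    qed
    then have "u \<bullet> (\<Lambda> *v v) - u \<bullet> (\<Lambda> *v u) = (\<Sum>j\<in>UNIV. \<Lambda> $ j $ j * (u $ j * (v $ j - u $ j)))"
      by (simp add: inner_vec_def sum_subtractf[symmetric] algebra_simps)
    also have "\<dots> \<ge> 0" using lampos comp by (intro sum_nonneg) (simp add: less_imp_le)
    finally show ?thesis .
  qed
  define z where "z = ((\<chi> i. case i of Inl p \<Rightarrow> dw $ p | Inr q \<Rightarrow> u $ q) :: real^('a+'b))"
  have psd: "z \<bullet> (block_mat R (transpose S - transpose W ** \<Lambda>) (S - \<Lambda> ** W) (2 *\<^sub>R \<Lambda> + Q) *v z) \<ge> 0"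
    using assms(6) unfolding psd_mat_def by blast
  have e2: "u \<bullet> ((S - \<Lambda> ** W) *v dw) = u \<bullet> (S *v dw) - u \<bullet> (\<Lambda> *v v)"
    by (simp add: matrix_vector_mult_diff_rdistrib matrix_vector_mul_assoc[symmetric] v_def inner_diff_right)
  have e1: "dw \<bullet> ((transpose S - transpose W ** \<Lambda>) *v u) = u \<bullet> (S *v dw) - u \<bullet> (\<Lambda> *v v)"
  proof -
    have "transpose S - transpose W ** \<Lambda> = transpose (S - \<Lambda> ** W)"
      by (simp add: transpose_diff' matrix_transpose_mul assms(5)[unfolded pos_def_mat_def symmetric_mat_def])
    then show ?thesis using e2 by (metis bilin_transpose)
  qed
  have e3: "u \<bullet> ((2 *\<^sub>R \<Lambda> + Q) *v u) = 2 * (u \<bullet> (\<Lambda> *v u)) + u \<bullet> (Q *v u)"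
    by (simp add: matrix_vector_mult_add_rdistrib inner_add_right scaleR_matrix_vector_assoc[symmetric])
  have "0 \<le> dw \<bullet> (R *v dw) + 2 * (u \<bullet> (S *v dw)) - 2 * (u \<bullet> (\<Lambda> *v v)) + 2 * (u \<bullet> (\<Lambda> *v u)) + u \<bullet> (Q *v u)"
    using psd unfolding z_def block_quad e1 e2 e3 by linarith
  then show "let dwi = layer W b \<phi> wa - layer W b \<phi> wb; dw = wa - wb in
           dwi \<bullet> (Q *v dwi) + 2 * (dwi \<bullet> (S *v dw)) + dw \<bullet> (R *v dw) \<ge> 0"
    using key unfolding Let_def u_def[symmetric] dw_def[symmetric] by linarith
qed

end
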